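(* Let $\mathbf v\in\mathbb R^{n\times m}_{<0}$ and $\mathbf b\in\mathbb R^n_{<0}$. The number of faces of the Pareto frontier of $\mathcal U(\mathbf v)$ and the number of competitive utility profiles $|\mathrm{CU}(\mathbf v,\mathbf b)|$ are both at most $(2m+1)^{n(n-1)/2}$.
   Context: Setup: agents $[n]$, chores $[m]$, allocations $\mathbf z\in\mathbb R^{n\times m}_{\ge0}$ with column sums $1$, $u_i(\mathbf z_i)=\sum_jv_{i,j}z_{i,j}$, $\mathcal U(\mathbf v)=\{\mathbf u(\mathbf z)\}$. A face of the Pareto frontier is a set $\arg\max_{\mathbf u\in\mathcal U(\mathbf v)}\langle\tau,\mathbf u\rangle$ for some $\tau\in\mathbb R^n_{>0}$. Competitive allocation for budgets $\mathbf b$: there exist prices $\mathbf p\in\mathbb R^m_{<0}$ such that each $\mathbf z_i$ maximizes $u_i$ over bundles $\mathbf x\in\mathbb R^m_{\ge0}$ with $\sum_jp_jx_j\le b_i$; $\mathrm{CU}(\mathbf v,\mathbf b)$ is the set of utility profiles of competitive allocations. *)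

theory Defs
  imports Complex_Main
begin

(* Agents are {..<n}, chores are {..<m}. Valuations v i j, allocations z i j.
   Utility profiles are functions nat => real, extended by 0 outside {..<n}. *)

definition allocation :: "nat \<Rightarrow> nat \<Rightarrow> (nat \<Rightarrow> nat \<Rightarrow> real) \<Rightarrow> bool" where
  "allocation n m z \<longleftrightarrow>
     (\<forall>i<n. \<forall>j<m. z i j \<ge> 0) \<and> (\<forall>j<m. (\<Sum>i<n. z i j) = 1)"

definition utility :: "nat \<Rightarrow> (nat \<Rightarrow> nat \<Rightarrow> real) \<Rightarrow> nat \<Rightarrow> (nat \<Rightarrow> real) \<Rightarrow> real" where
  "utility m v i x = (\<Sum>j<m. v i j * x j)"

definition util_profile :: "nat \<Rightarrow> nat \<Rightarrow> (nat \<Rightarrow> nat \<Rightarrow> real) \<Rightarrow> (nat \<Rightarrow> nat \<Rightarrow> real) \<Rightarrow> (nat \<Rightarrow> real)" where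
  "util_profile n m v z = (\<lambda>i. if i < n then utility m v i (z i) else 0)"

definition util_set :: "nat \<Rightarrow> nat \<Rightarrow> (nat \<Rightarrow> nat \<Rightarrow> real) \<Rightarrow> (nat \<Rightarrow> real) set" where
  "util_set n m v = {util_profile n m v z | z. allocation n m z}"

definition face :: "nat \<Rightarrow> (nat \<Rightarrow> real) set \<Rightarrow> (nat \<Rightarrow> real) \<Rightarrow> (nat \<Rightarrow> real) set" where
  "face n U \<tau> = {u \<in> U. \<forall>u'\<in>U. (\<Sum>i<n. \<tau> i * u' i) \<le> (\<Sum>i<n. \<tau> i * u i)}"

definition pareto_faces :: "nat \<Rightarrow> nat \<Rightarrow> (nat \<Rightarrow> nat \<Rightarrow> real) \<Rightarrow> (nat \<Rightarrow> real) set set" where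
  "pareto_faces n m v = {face n (util_set n m v) \<tau> | \<tau>. \<forall>i<n. \<tau> i > 0}"

definition is_bundle :: "nat \<Rightarrow> (nat \<Rightarrow> real) \<Rightarrow> bool" where
  "is_bundle m x \<longleftrightarrow> (\<forall>j<m. x j \<ge> 0)"

definition affordable :: "nat \<Rightarrow> (nat \<Rightarrow> real) \<Rightarrow> real \<Rightarrow> (nat \<Rightarrow> real) \<Rightarrow> bool" where
  "affordable m p bi x \<longleftrightarrow> is_bundle m x \<and> (\<Sum>j<m. p j * x j) \<le> bi"

definition competitive :: "nat \<Rightarrow> nat \<Rightarrow> (nat \<Rightarrow> nat \<Rightarrow> real) \<Rightarrow> (nat \<Rightarrow> real) \<Rightarrow> (nat \<Rightarrow> nat \<Rightarrow> real) \<Rightarrow> bool" where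
  "competitive n m v b z \<longleftrightarrow> allocation n m z \<and>
     (\<exists>p. (\<forall>j<m. p j < 0) \<and>
        (\<forall>i<n. affordable m p (b i) (z i) \<and>
           (\<forall>x. affordable m p (b i) x \<longrightarrow> utility m v i x \<le> utility m v i (z i))))"

definition CU :: "nat \<Rightarrow> nat \<Rightarrow> (nat \<Rightarrow> nat \<Rightarrow> real) \<Rightarrow> (nat \<Rightarrow> real) \<Rightarrow> (nat \<Rightarrow> real) set" where
  "CU n m v b = {util_profile n m v z | z. competitive n m v b z}"

end

theory Submission
  imports Defs "HOL-Library.FuncSet"
begin


definition pos :: "real set \<Rightarrow> real \<Rightarrow> nat" where
  "pos R t = 2 * card {r\<in>R. r < t} + (if t \<in> R then 1 else 0)"

lemma pos_le: assumes "finite R" shows "pos R t \<le> 2 * card R"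
proof (cases "t \<in> R")
  case True
  have "{r\<in>R. r < t} \<subseteq> R - {t}" by auto
  hence "card {r\<in>R. r < t} \<le> card (R - {t})" using assms by (intro card_mono) auto
  moreover have "card (R - {t}) = card R - 1" using True assms by simp
  moreover have "card R > 0" using True assms by (auto simp: card_gt_0_iff)
  ultimately show ?thesis using True unfolding pos_def by simp
next
  case False
  have "card {r\<in>R. r < t} \<le> card R" using assms by (intro card_mono) auto
  thus ?thesis using False unfolding pos_def by simp
qed

lemma pos_key: assumes "finite R" "t < t'" "r \<in> R" "t \<le> r" "r \<le> t'"
  shows "pos R t < pos R t'"
proof -
  let ?A = "{r\<in>R. r < t}" and ?B = "{r\<in>R. r < t'}"
  have fB: "finite ?B" using assms by auto
  show ?thesis
  proof (cases "t \<in> R")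
    case True
    have "insert t ?A \<subseteq> ?B" using assms True by auto
    hence "card (insert t ?A) \<le> card ?B" using fB by (intro card_mono) auto
    hence "card ?A + 1 \<le> card ?B" using assms by simp
    thus ?thesis using True unfolding pos_def by simp
  next
    case False
    hence rt: "t < r" using assms by (cases "t = r") auto
    show ?thesis
    proof (cases "r < t'")
      case True
      have "insert r ?A \<subseteq> ?B" using assms True by auto
      hence "card (insert r ?A) \<le> card ?B" using fB by (intro card_mono) auto
      hence "card ?A + 1 \<le> card ?B" using assms rt by simp
      thus ?thesis using False unfolding pos_def by simp
    next
      case False
      hence "r = t'" using assms by simp
      hence "t' \<in> R" using assms by simp
      moreover have "card ?A \<le> card ?B" using fB assms by (intro card_mono) auto
      ultimately show ?thesis using \<open>t \<notin> R\<close> unfolding pos_def by simp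
    qed
  qed
qed

lemma pos_eq: assumes "finite R" "pos R t = pos R t'" "r \<in> R"
  shows "(r \<le> t \<longleftrightarrow> r \<le> t') \<and> (t \<le> r \<longleftrightarrow> t' \<le> r)"
proof (cases t t' rule: linorder_cases)
  case less
  have "\<not> (t \<le> r \<and> r \<le> t')"
  proof
    assume "t \<le> r \<and> r \<le> t'"
    hence "pos R t < pos R t'" using pos_key[OF assms(1) less assms(3)] by blast
    thus False using assms(2) by simp
  qed
  thus ?thesis using less by auto
next
  case equal thus ?thesis by simp
next
  case greater
  have "\<not> (t' \<le> r \<and> r \<le> t)"
  proof
    assume "t' \<le> r \<and> r \<le> t"
    hence "pos R t' < pos R t" using pos_key[OF assms(1) greater assms(3)] by blast
    thus False using assms(2) by simp
  qed
  thus ?thesis using greater by auto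
qed

lemma tau_sum: "(\<Sum>i<n. \<tau> i * util_profile n m v z i) = (\<Sum>j<m. \<Sum>i<n. \<tau> i * v i j * z i j)"
  unfolding util_profile_def utility_def
  by (simp add: sum_distrib_left sum.swap[of _ "{..<n}"] mult.assoc)

definition supp_ok where
  "supp_ok n m v \<tau> z \<longleftrightarrow> (\<forall>i<n. \<forall>j<m. z i j > 0 \<longrightarrow> (\<forall>k<n. \<tau> k * v k j \<le> \<tau> i * v i j))"

lemma col_le:
  assumes "allocation n m z" "j < m"
  shows "(\<Sum>i<n. \<tau> i * v i j * z i j) \<le> Max ((\<lambda>i. \<tau> i * v i j) ` {..<n})"
proof -
  let ?M = "Max ((\<lambda>i. \<tau> i * v i j) ` {..<n})"
  have "(\<Sum>i<n. \<tau> i * v i j * z i j) \<le> (\<Sum>i<n. ?M * z i j)"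
    using assms by (intro sum_mono mult_right_mono) (auto simp: allocation_def)
  also have "\<dots> = ?M" using assms by (simp add: allocation_def sum_distrib_left[symmetric])
  finally show ?thesis .
qed

lemma col_eq:
  assumes "allocation n m z" "j < m" "supp_ok n m v \<tau> z"
  shows "(\<Sum>i<n. \<tau> i * v i j * z i j) = Max ((\<lambda>i. \<tau> i * v i j) ` {..<n})"
proof -
  let ?M = "Max ((\<lambda>i. \<tau> i * v i j) ` {..<n})"
  have "(\<Sum>i<n. \<tau> i * v i j * z i j) = (\<Sum>i<n. ?M * z i j)"
  proof (intro sum.cong refl)
    fix i assume i: "i \<in> {..<n}"
    show "\<tau> i * v i j * z i j = ?M * z i j"
    proof (cases "z i j > 0")
      case True
      hence "\<forall>k<n. \<tau> k * v k j \<le> \<tau> i * v i j" using assms i unfolding supp_ok_def by auto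
      hence "?M \<le> \<tau> i * v i j" using i by (intro Max.boundedI) auto
      moreover have "\<tau> i * v i j \<le> ?M" using i by (intro Max_ge) auto
      ultimately show ?thesis by simp
    next
      case False
      hence "z i j = 0" using assms i unfolding allocation_def by force
      thus ?thesis by simp
    qed
  qed
  also have "\<dots> = ?M" using assms by (simp add: allocation_def sum_distrib_left[symmetric])
  finally show ?thesis .
qed

lemma face_char:
  "face n (util_set n m v) \<tau> = {util_profile n m v z | z. allocation n m z \<and> supp_ok n m v \<tau> z}"
proof (intro set_eqI iffI)
  fix u assume "u \<in> {util_profile n m v z | z. allocation n m z \<and> supp_ok n m v \<tau> z}"
  then obtain z where z: "u = util_profile n m v z" "allocation n m z" "supp_ok n m v \<tau> z" by auto
  show "u \<in> face n (util_set n m v) \<tau>"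
    unfolding face_def
  proof (intro CollectI conjI ballI)
    show "u \<in> util_set n m v" using z unfolding util_set_def by auto
    fix u' assume "u' \<in> util_set n m v"
    then obtain z' where z': "u' = util_profile n m v z'" "allocation n m z'" unfolding util_set_def by auto
    show "(\<Sum>i<n. \<tau> i * u' i) \<le> (\<Sum>i<n. \<tau> i * u i)"
    proof -
      have "(\<Sum>j<m. \<Sum>i<n. \<tau> i * v i j * z' i j) \<le> (\<Sum>j<m. \<Sum>i<n. \<tau> i * v i j * z i j)"
      proof (rule sum_mono)
        fix j assume "j \<in> {..<m}"
        hence "j < m" by simp
        show "(\<Sum>i<n. \<tau> i * v i j * z' i j) \<le> (\<Sum>i<n. \<tau> i * v i j * z i j)"
          using col_le[OF z'(2) \<open>j<m\<close>] col_eq[OF z(2) \<open>j<m\<close> z(3)] by simp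
      qed
      thus ?thesis unfolding z z' tau_sum .
    qed
  qed
next
  fix u assume u: "u \<in> face n (util_set n m v) \<tau>"
  then obtain z where z: "u = util_profile n m v z" "allocation n m z"
    unfolding face_def util_set_def by auto
  have sup: "supp_ok n m v \<tau> z"
    unfolding supp_ok_def
  proof (intro allI impI)
    fix i j k assume i: "i < n" and j: "j < m" and zij: "z i j > 0" and k: "k < n"
    define M where "M = (\<lambda>j. Max ((\<lambda>i. \<tau> i * v i j) ` {..<n}))"
    define g where "g = (\<lambda>j. SOME i. i < n \<and> \<tau> i * v i j = M j)"
    have g: "g j < n \<and> \<tau> (g j) * v (g j) j = M j" for j
    proof -
      have "M j \<in> (\<lambda>i. \<tau> i * v i j) ` {..<n}" unfolding M_def using i by (intro Max_in) auto
      hence "\<exists>i. i < n \<and> \<tau> i * v i j = M j" by auto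
      thus ?thesis unfolding g_def by (rule someI_ex)
    qed
    define zs where "zs = (\<lambda>i j. if i = g j then (1::real) else 0)"
    have als: "allocation n m zs" unfolding allocation_def zs_def using g
    proof (intro conjI allI impI)
      fix j assume "j < m"
      have "(\<Sum>i<n. if i = g j then (1::real) else 0) = 1" using g[of j] by (simp add: sum.delta)
      thus "(\<Sum>i<n. if i = g j then (1::real) else 0) = 1" .
    qed auto
    have T: "(\<Sum>i<n. \<tau> i * v i j * zs i j) = M j" for j
    proof -
      have "(\<Sum>i<n. \<tau> i * v i j * zs i j) = (\<Sum>i<n. if i = g j then \<tau> i * v i j else 0)"
        by (intro sum.cong) (auto simp: zs_def)
      also have "\<dots> = M j" using g[of j] by (simp add: sum.delta)
      finally show ?thesis .
    qed
    have "util_profile n m v zs \<in> util_set n m v" using als unfolding util_set_def by auto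
    hence "(\<Sum>i<n. \<tau> i * util_profile n m v zs i) \<le> (\<Sum>i<n. \<tau> i * u i)"
      using u unfolding face_def by auto
    hence le: "(\<Sum>j<m. M j) \<le> (\<Sum>j<m. \<Sum>i<n. \<tau> i * v i j * z i j)"
      unfolding z tau_sum T .
    have cl: "\<And>j. j \<in> {..<m} \<Longrightarrow> (\<Sum>i<n. \<tau> i * v i j * z i j) \<le> M j"
      unfolding M_def using z by (auto intro: col_le)
    have eqs: "(\<Sum>i<n. \<tau> i * v i j * z i j) = M j"
    proof -
      have "(\<Sum>j<m. \<Sum>i<n. \<tau> i * v i j * z i j) = (\<Sum>j<m. M j)"
        by (rule antisym[OF sum_mono[OF cl] le])
      from sum_mono_inv[OF this cl] j show ?thesis by auto
    qed
    have "(\<Sum>i<n. (M j - \<tau> i * v i j) * z i j) = M j * (\<Sum>i<n. z i j) - (\<Sum>i<n. \<tau> i * v i j * z i j)"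
      by (simp add: algebra_simps sum_subtractf sum_distrib_left)
    also have "\<dots> = 0" using eqs z j unfolding allocation_def by simp
    finally have s0: "(\<Sum>i<n. (M j - \<tau> i * v i j) * z i j) = 0" .
    have nn: "\<forall>i\<in>{..<n}. 0 \<le> (M j - \<tau> i * v i j) * z i j"
    proof
      fix i assume "i \<in> {..<n}"
      moreover have "\<tau> i * v i j \<le> M j" if "i \<in> {..<n}" for i unfolding M_def using that by (intro Max_ge) auto
      ultimately show "0 \<le> (M j - \<tau> i * v i j) * z i j" using z j unfolding allocation_def by auto
    qed
    have "(M j - \<tau> i * v i j) * z i j = 0"
    proof -
      have "\<forall>x\<in>{..<n}. (M j - \<tau> x * v x j) * z x j = 0"
        using sum_nonneg_eq_0_iff[of "{..<n}" "\<lambda>x. (M j - \<tau> x * v x j) * z x j"] s0 nn by auto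
      thus ?thesis using i by auto
    qed
    hence "\<tau> i * v i j = M j" using zij by simp
    moreover have "\<tau> k * v k j \<le> M j" unfolding M_def using k by (intro Max_ge) auto
    ultimately show "\<tau> k * v k j \<le> \<tau> i * v i j" by simp
  qed
  show "u \<in> {util_profile n m v z | z. allocation n m z \<and> supp_ok n m v \<tau> z}"
    using z sup by auto
qed



definition Pairs :: "nat \<Rightarrow> (nat \<times> nat) set" where
  "Pairs n = {(a, c). a < c \<and> c < n}"

definition code :: "nat \<Rightarrow> nat \<Rightarrow> (nat \<Rightarrow> nat \<Rightarrow> real) \<Rightarrow> (nat \<Rightarrow> real) \<Rightarrow> (nat \<times> nat \<Rightarrow> nat)" where
  "code n m v \<tau> = (\<lambda>(a, c) \<in> Pairs n. pos ((\<lambda>j. v a j / v c j) ` {..<m}) (\<tau> c / \<tau> a))"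

lemma cmp:
  fixes x y s t :: real
  assumes "x < 0" "y < 0" "s > 0" "t > 0"
  shows "(t * y \<le> s * x \<longleftrightarrow> x / y \<le> t / s) \<and> (s * x \<le> t * y \<longleftrightarrow> t / s \<le> x / y)"
proof -
  have "x / y \<le> t / s \<longleftrightarrow> x * s \<ge> t * y" using assms by (simp add: divide_simps)
  moreover have "t / s \<le> x / y \<longleftrightarrow> x * s \<le> t * y" using assms by (simp add: divide_simps)
  ultimately show ?thesis by (simp add: mult.commute)
qed

lemma code_cmp:
  assumes v: "\<forall>i<n. \<forall>j<m. v i j < 0"
    and t: "\<forall>i<n. \<tau> i > 0" and t': "\<forall>i<n. \<tau>' i > 0"
    and c: "code n m v \<tau> = code n m v \<tau>'"
    and i: "i < n" and k: "k < n" and j: "j < m"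
  shows "\<tau> k * v k j \<le> \<tau> i * v i j \<longleftrightarrow> \<tau>' k * v k j \<le> \<tau>' i * v i j"
proof -
  have gen: "pos ((\<lambda>j. v a j / v c j) ` {..<m}) (\<tau> c / \<tau> a) = pos ((\<lambda>j. v a j / v c j) ` {..<m}) (\<tau>' c / \<tau>' a)"
    if "a < c" "c < n" for a c
  proof -
    have "(a, c) \<in> Pairs n" using that by (simp add: Pairs_def)
    from fun_cong[OF c, of "(a,c)"] this show ?thesis by (simp add: code_def)
  qed
  have vi: "v i j < 0" using v i j by auto
  have vk: "v k j < 0" using v k j by auto
  have ti: "\<tau> i > 0" using t i by auto
  have tk: "\<tau> k > 0" using t k by auto
  have ti': "\<tau>' i > 0" using t' i by auto
  have tk': "\<tau>' k > 0" using t' k by auto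
  consider "i = k" | "i < k" | "k < i" by linarith
  thus ?thesis
  proof cases
    case 1 thus ?thesis by simp
  next
    case 2
    have pe: "(v i j / v k j \<le> \<tau> k / \<tau> i \<longleftrightarrow> v i j / v k j \<le> \<tau>' k / \<tau>' i)"
      using pos_eq[OF _ gen[OF 2 k], of "v i j / v k j"] j by auto
    have A: "\<tau> k * v k j \<le> \<tau> i * v i j \<longleftrightarrow> v i j / v k j \<le> \<tau> k / \<tau> i"
      using cmp[OF vi vk ti tk] by (rule conjunct1)
    have B: "\<tau>' k * v k j \<le> \<tau>' i * v i j \<longleftrightarrow> v i j / v k j \<le> \<tau>' k / \<tau>' i"
      using cmp[OF vi vk ti' tk'] by (rule conjunct1)
    show ?thesis using A B pe by (simp only:)
  next
    case 3
    have pe: "(\<tau> i / \<tau> k \<le> v k j / v i j \<longleftrightarrow> \<tau>' i / \<tau>' k \<le> v k j / v i j)"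
      using pos_eq[OF _ gen[OF 3 i], of "v k j / v i j"] j by auto
    have A: "\<tau> k * v k j \<le> \<tau> i * v i j \<longleftrightarrow> \<tau> i / \<tau> k \<le> v k j / v i j"
      using cmp[OF vk vi tk ti] by (rule conjunct2)
    have B: "\<tau>' k * v k j \<le> \<tau>' i * v i j \<longleftrightarrow> \<tau>' i / \<tau>' k \<le> v k j / v i j"
      using cmp[OF vk vi tk' ti'] by (rule conjunct2)
    show ?thesis using A B pe by (simp only:)
  qed
qed

lemma code_in: "code n m v \<tau> \<in> Pairs n \<rightarrow>\<^sub>E {..2*m}"
proof -
  have "pos ((\<lambda>j. v a j / v c j) ` {..<m}) (\<tau> c / \<tau> a) \<le> 2 * m" for a c
  proof -
    have "pos ((\<lambda>j. v a j / v c j) ` {..<m}) (\<tau> c / \<tau> a) \<le> 2 * card ((\<lambda>j. v a j / v c j) ` {..<m})"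
      by (rule pos_le) auto
    also have "\<dots> \<le> 2 * m" using card_image_le[of "{..<m}" "\<lambda>j. v a j / v c j"] by simp
    finally show ?thesis .
  qed
  thus ?thesis unfolding code_def by (auto simp: PiE_iff)
qed

lemma card_Pairs: "card (Pairs n) = n * (n - 1) div 2"
proof -
  have "2 * card (Pairs n) = n * (n - 1) \<and> finite (Pairs n)"
  proof (induction n)
    case 0 thus ?case by (simp add: Pairs_def)
  next
    case (Suc n)
    have eq: "Pairs (Suc n) = Pairs n \<union> (\<lambda>i. (i, n)) ` {..<n}" by (auto simp: Pairs_def)
    have dis: "Pairs n \<inter> (\<lambda>i. (i, n)) ` {..<n} = {}" by (auto simp: Pairs_def)
    have "card (Pairs (Suc n)) = card (Pairs n) + n"
      unfolding eq using Suc dis by (simp add: card_Un_disjoint card_image inj_on_def)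
    hence "2 * card (Pairs (Suc n)) = n * (n - 1) + 2 * n" using Suc by simp
    also have "\<dots> = Suc n * (Suc n - 1)" by (cases n) (auto simp: algebra_simps)
    finally show ?case using Suc eq by simp
  qed
  hence "2 * card (Pairs n) = n * (n - 1)" by simp
  thus ?thesis by (metis nonzero_mult_div_cancel_left zero_neq_numeral)
qed

lemma card_codes: "finite (Pairs n \<rightarrow>\<^sub>E {..2*m}) \<and> card (Pairs n \<rightarrow>\<^sub>E {..2*m}) = (2*m+1) ^ (n * (n - 1) div 2)"
proof -
  have f: "finite (Pairs n)" by (rule finite_subset[of _ "{..<n} \<times> {..<n}"]) (auto simp: Pairs_def)
  show ?thesis using f by (simp add: card_PiE finite_PiE card_Pairs)
qed

lemma image_factor:
  assumes "\<And>x y. x \<in> T \<Longrightarrow> y \<in> T \<Longrightarrow> g x = g y \<Longrightarrow> f x = f y"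
  shows "f ` T = (\<lambda>c. f (SOME x. x \<in> T \<and> g x = c)) ` (g ` T)"
proof -
  have "f x = f (SOME y. y \<in> T \<and> g y = g x)" if "x \<in> T" for x
  proof -
    have "\<exists>y. y \<in> T \<and> g y = g x" using that by auto
    from someI_ex[OF this] have "(SOME y. y \<in> T \<and> g y = g x) \<in> T \<and> g (SOME y. y \<in> T \<and> g y = g x) = g x" .
    thus ?thesis using assms that by metis
  qed
  thus ?thesis by (auto simp: image_iff)
qed



lemma bundle_bound:
  assumes v: "\<forall>j<m. v i j < 0" and bi: "bi < 0" and p: "\<forall>j<m. p j < 0"
    and opt: "\<forall>x. affordable m p bi x \<longrightarrow> utility m v i x \<le> ui"
    and ui: "ui < 0"
    and x: "is_bundle m x"
  shows "(bi / ui) * utility m v i x \<le> (\<Sum>j<m. p j * x j)"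
proof -
  define c where "c = (\<Sum>j<m. p j * x j)"
  have terms: "\<forall>j\<in>{..<m}. p j * x j \<le> 0" using p x unfolding is_bundle_def
    by (auto simp: mult_nonpos_nonneg less_imp_le)
  hence c0: "c \<le> 0" unfolding c_def by (intro sum_nonpos) auto
  show ?thesis
  proof (cases "c = 0")
    case True
    have "\<forall>j\<in>{..<m}. p j * x j = 0"
    proof -
      have "(\<Sum>j<m. - (p j * x j)) = 0" using True unfolding c_def by (simp add: sum_negf)
      moreover have "\<forall>j\<in>{..<m}. 0 \<le> - (p j * x j)" using terms by auto
      ultimately show ?thesis using sum_nonneg_eq_0_iff[of "{..<m}" "\<lambda>j. - (p j * x j)"] by auto
    qed
    hence "\<forall>j\<in>{..<m}. x j = 0"
    proof (intro ballI)
      fix j assume "\<forall>j\<in>{..<m}. p j * x j = 0" "j \<in> {..<m}"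
      hence "p j * x j = 0" "p j < 0" using p by auto
      thus "x j = 0" by simp
    qed
    hence "utility m v i x = 0" unfolding utility_def by simp
    thus ?thesis using True c_def by simp
  next
    case False
    hence cn: "c < 0" using c0 by simp
    define x' where "x' = (\<lambda>j. (bi / c) * x j)"
    have pos: "bi / c > 0" using cn bi by (simp add: divide_neg_neg)
    have "affordable m p bi x'"
      unfolding affordable_def is_bundle_def
    proof
      show "\<forall>j<m. 0 \<le> x' j" unfolding x'_def
      proof (intro allI impI mult_nonneg_nonneg)
        fix j assume "j < m" thus "0 \<le> x j" using x unfolding is_bundle_def by auto
      qed (use pos in auto)
      have "(\<Sum>j<m. p j * x' j) = (\<Sum>j<m. (bi / c) * (p j * x j))"
        by (rule sum.cong) (simp_all add: x'_def ac_simps)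
      also have "\<dots> = (bi / c) * c" by (simp only: c_def sum_distrib_left)
      also have "\<dots> = bi" using cn by simp
      finally show "(\<Sum>j<m. p j * x' j) \<le> bi" by simp
    qed
    hence "utility m v i x' \<le> ui" using opt by auto
    moreover have "utility m v i x' = (bi / c) * utility m v i x" unfolding utility_def x'_def
      by (simp add: sum_distrib_left algebra_simps)
    ultimately have h: "(bi / c) * utility m v i x \<le> ui" by simp
    have "(bi / ui) * utility m v i x = ((bi / c) * utility m v i x) * (c / ui)"
      using cn ui by (simp add: field_simps)
    also have "\<dots> \<le> ui * (c / ui)"
      using h cn ui by (intro mult_right_mono) (auto simp: divide_nonpos_neg)
    also have "\<dots> = c" using ui by simp
    finally show ?thesis unfolding c_def .
  qed
qed

lemma CE_props:
  assumes v: "\<forall>i<n. \<forall>j<m. v i j < 0" and b: "\<forall>i<n. b i < 0"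
    and ce: "competitive n m v b z"
  shows "(\<forall>i<n. util_profile n m v z i < 0) \<and>
         util_profile n m v z \<in> face n (util_set n m v) (\<lambda>i. b i / util_profile n m v z i)"
proof -
  let ?u = "util_profile n m v z"
  from ce obtain p where al: "allocation n m z" and p: "\<forall>j<m. p j < 0"
    and aff: "\<forall>i<n. affordable m p (b i) (z i)"
    and opt: "\<forall>i<n. \<forall>x. affordable m p (b i) x \<longrightarrow> utility m v i x \<le> utility m v i (z i)"
    unfolding competitive_def by blast
  have neg: "?u i < 0" if i: "i < n" for i
  proof -
    have "(\<Sum>j<m. p j * z i j) \<le> b i" using aff i unfolding affordable_def by auto
    hence "(\<Sum>j<m. p j * z i j) \<noteq> 0" using b i by auto
    have "\<exists>j\<in>{..<m}. p j * z i j \<noteq> 0"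
    proof (rule ccontr)
      assume "\<not> (\<exists>j\<in>{..<m}. p j * z i j \<noteq> 0)"
      hence "\<forall>j\<in>{..<m}. p j * z i j = 0" by auto
      hence "(\<Sum>j<m. p j * z i j) = 0" by (rule sum.neutral)
      thus False using \<open>(\<Sum>j<m. p j * z i j) \<noteq> 0\<close> by simp
    qed
    then obtain j0 where j0: "j0 < m" "p j0 * z i j0 \<noteq> 0" by auto
    have "z i j0 \<noteq> 0" using j0 by auto
    moreover have "z i j0 \<ge> 0" using al i j0 by (auto simp: allocation_def)
    ultimately have zpos: "z i j0 > 0" by simp
    have "utility m v i (z i) = v i j0 * z i j0 + (\<Sum>j\<in>{..<m} - {j0}. v i j * z i j)"
      unfolding utility_def using j0 by (simp add: sum.remove)
    also have "(\<Sum>j\<in>{..<m} - {j0}. v i j * z i j) \<le> 0"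
      using v al i unfolding allocation_def by (intro sum_nonpos) (auto simp: mult_nonpos_nonneg less_imp_le)
    moreover have "v i j0 * z i j0 < 0" using v i j0 zpos by (simp add: mult_neg_pos)
    ultimately have "utility m v i (z i) < 0" by linarith
    thus ?thesis using i unfolding util_profile_def by simp
  qed
  have ub: "(b i / ?u i) * utility m v i x \<le> (\<Sum>j<m. p j * x j)" if i: "i < n" and x: "is_bundle m x" for i x
    using bundle_bound[of m v i "b i" p "?u i" x] v b p opt neg i x unfolding util_profile_def by auto
  have self: "(\<Sum>i<n. (b i / ?u i) * ?u i) = (\<Sum>i<n. b i)"
  proof (intro sum.cong refl)
    fix i assume "i \<in> {..<n}"
    hence "?u i < 0" using neg by auto
    thus "(b i / ?u i) * ?u i = b i" by simp
  qed
  have pb: "(\<Sum>j<m. p j) \<le> (\<Sum>i<n. b i)"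
  proof -
    have "(\<Sum>j<m. p j) = (\<Sum>j<m. p j * (\<Sum>i<n. z i j))" using al unfolding allocation_def by simp
    also have "\<dots> = (\<Sum>i<n. \<Sum>j<m. p j * z i j)" by (simp add: sum_distrib_left sum.swap[of _ "{..<m}"])
    also have "\<dots> \<le> (\<Sum>i<n. b i)" using aff unfolding affordable_def by (intro sum_mono) auto
    finally show ?thesis .
  qed
  have mem: "?u \<in> util_set n m v" using al unfolding util_set_def by auto
  have "\<forall>u'\<in>util_set n m v. (\<Sum>i<n. (b i / ?u i) * u' i) \<le> (\<Sum>i<n. (b i / ?u i) * ?u i)"
  proof
    fix u' assume "u' \<in> util_set n m v"
    then obtain z' where z': "u' = util_profile n m v z'" "allocation n m z'" unfolding util_set_def by auto
    have "(\<Sum>i<n. (b i / ?u i) * u' i) \<le> (\<Sum>i<n. \<Sum>j<m. p j * z' i j)"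
    proof (intro sum_mono)
      fix i assume "i \<in> {..<n}"
      hence i: "i < n" by simp
      have "is_bundle m (z' i)" using z' i unfolding allocation_def is_bundle_def by auto
      from ub[OF i this] show "(b i / ?u i) * u' i \<le> (\<Sum>j<m. p j * z' i j)"
        using i z' unfolding util_profile_def by simp
    qed
    also have "\<dots> = (\<Sum>j<m. p j * (\<Sum>i<n. z' i j))" by (simp add: sum_distrib_left sum.swap[of _ "{..<m}"])
    also have "\<dots> = (\<Sum>j<m. p j)" using z' unfolding allocation_def by simp
    also have "\<dots> \<le> (\<Sum>i<n. (b i / ?u i) * ?u i)" using pb self by simp
    finally show "(\<Sum>i<n. (b i / ?u i) * u' i) \<le> (\<Sum>i<n. (b i / ?u i) * ?u i)" .
  qed
  thus ?thesis using mem neg unfolding face_def by blast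
qed


lemma pt:
  fixes b x y :: real
  assumes "b < 0" "x < 0" "y < 0"
  shows "(b/x)*y + (b/y)*x - 2*b \<le> 0 \<and> ((b/x)*y + (b/y)*x - 2*b = 0 \<longrightarrow> x = y)"
proof -
  have eq: "(b/x)*y + (b/y)*x - 2*b = b*(x-y)^2/(x*y)" using assms by (simp add: field_simps power2_eq_square)
  have xy: "x*y > 0" using assms by (simp add: mult_neg_neg)
  have "b*(x-y)^2 \<le> 0" using assms by (simp add: mult_nonpos_nonneg)
  hence le: "b*(x-y)^2/(x*y) \<le> 0" using xy by (simp add: divide_nonpos_pos)
  have "b*(x-y)^2/(x*y) = 0 \<Longrightarrow> x = y" using xy assms by simp
  thus ?thesis using eq le by simp
qed

lemma CU_inj:
  assumes b: "\<forall>i<n. b i < 0"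
    and un: "\<forall>i<n. u i < 0" and un': "\<forall>i<n. u' i < 0"
    and uo: "\<forall>i\<ge>n. u i = 0" and uo': "\<forall>i\<ge>n. u' i = 0"
    and uf: "u \<in> face n U (\<lambda>i. b i / u i)" and uf': "u' \<in> face n U (\<lambda>i. b i / u' i)"
    and eqf: "face n U (\<lambda>i. b i / u i) = face n U (\<lambda>i. b i / u' i)"
  shows "u = u'"
proof -
  have u1: "u' \<in> face n U (\<lambda>i. b i / u i)" using uf' eqf by simp
  have u2: "u \<in> face n U (\<lambda>i. b i / u' i)" using uf eqf by simp
  have s1a: "(\<Sum>i<n. (b i / u i) * u' i) \<le> (\<Sum>i<n. (b i / u i) * u i)"
    using uf u1 unfolding face_def by blast
  have s1b: "(\<Sum>i<n. (b i / u i) * u i) \<le> (\<Sum>i<n. (b i / u i) * u' i)"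
    using uf u1 unfolding face_def by blast
  have s2a: "(\<Sum>i<n. (b i / u' i) * u i) \<le> (\<Sum>i<n. (b i / u' i) * u' i)"
    using uf' u2 unfolding face_def by blast
  have s2b: "(\<Sum>i<n. (b i / u' i) * u' i) \<le> (\<Sum>i<n. (b i / u' i) * u i)"
    using uf' u2 unfolding face_def by blast
  have s1: "(\<Sum>i<n. (b i / u i) * u' i) = (\<Sum>i<n. (b i / u i) * u i)"
    using s1a s1b by (rule antisym)
  have s2: "(\<Sum>i<n. (b i / u' i) * u i) = (\<Sum>i<n. (b i / u' i) * u' i)"
    using s2a s2b by (rule antisym)
  have bu: "(\<Sum>i<n. (b i / u i) * u i) = (\<Sum>i<n. b i)"
    by (rule sum.cong) (use un in auto)
  have bu': "(\<Sum>i<n. (b i / u' i) * u' i) = (\<Sum>i<n. b i)"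
    by (rule sum.cong) (use un' in auto)
  have tot: "(\<Sum>i<n. (b i / u i) * u' i + (b i / u' i) * u i - 2 * b i) = 0"
    using s1 s2 bu bu' by (simp add: sum.distrib sum_subtractf sum_distrib_left[symmetric])
  have "\<forall>i\<in>{..<n}. - ((b i / u i) * u' i + (b i / u' i) * u i - 2 * b i) = 0"
  proof -
    have s0: "(\<Sum>i<n. - ((b i / u i) * u' i + (b i / u' i) * u i - 2 * b i)) = 0"
      by (simp only: sum_negf tot minus_zero)
    have nn:  "\<forall>i\<in>{..<n}. 0 \<le> - ((b i / u i) * u' i + (b i / u' i) * u i - 2 * b i)"
    proof
      fix i assume "i \<in> {..<n}"
      hence "b i < 0" "u i < 0" "u' i < 0" using b un un' by auto
      from conjunct1[OF pt[OF this]]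
      show "0 \<le> - ((b i / u i) * u' i + (b i / u' i) * u i - 2 * b i)" by linarith
    qed
    have "(\<Sum>i<n. - ((b i / u i) * u' i + (b i / u' i) * u i - 2 * b i)) = 0 \<longleftrightarrow>
      (\<forall>i\<in>{..<n}. - ((b i / u i) * u' i + (b i / u' i) * u i - 2 * b i) = 0)"
      by (rule sum_nonneg_eq_0_iff) (use nn in auto)
    thus ?thesis using s0 by (rule iffD1)
  qed
  hence eqn: "\<forall>i<n. u i = u' i"
  proof (intro allI impI)
    fix i assume h: "\<forall>i\<in>{..<n}. - ((b i / u i) * u' i + (b i / u' i) * u i - 2 * b i) = 0" and i: "i < n"
    hence "b i < 0" "u i < 0" "u' i < 0" using b un un' by auto
    from conjunct2[OF pt[OF this]] h i show "u i = u' i" by simp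
  qed
  show ?thesis
  proof (rule ext)
    fix i show "u i = u' i"
    proof (cases "i < n")
      case True thus ?thesis using eqn by simp
    next
      case False thus ?thesis using uo uo' by simp
    qed
  qed
qed

theorem corollary3:
  fixes n m :: nat and v :: "nat \<Rightarrow> nat \<Rightarrow> real" and b :: "nat \<Rightarrow> real"
  assumes "\<forall>i<n. \<forall>j<m. v i j < 0"
    and "\<forall>i<n. b i < 0"
  shows "finite (pareto_faces n m v) \<and> card (pareto_faces n m v) \<le> (2*m+1) ^ (n*(n-1) div 2)
       \<and> finite (CU n m v b) \<and> card (CU n m v b) \<le> (2*m+1) ^ (n*(n-1) div 2)"
proof -
  define T where "T = {\<tau> :: nat \<Rightarrow> real. \<forall>i<n. \<tau> i > 0}"
  define U where "U = util_set n m v"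
  define h where "h = (\<lambda>c. face n U (SOME x. x \<in> T \<and> code n m v x = c))"
  have PF: "pareto_faces n m v = (\<lambda>\<tau>. face n U \<tau>) ` T"
    unfolding pareto_faces_def T_def U_def by auto
  have fac: "face n U x = face n U y" if "x \<in> T" "y \<in> T" "code n m v x = code n m v y" for x y
  proof -
    have "supp_ok n m v x z = supp_ok n m v y z" for z :: "nat \<Rightarrow> nat \<Rightarrow> real"
      unfolding supp_ok_def using code_cmp[OF assms(1), of x y] that unfolding T_def by auto
    hence "supp_ok n m v x = (supp_ok n m v y :: (nat \<Rightarrow> nat \<Rightarrow> real) \<Rightarrow> bool)" by (intro ext)
    thus ?thesis unfolding U_def face_char by (simp only:)
  qed
  have PF2: "pareto_faces n m v = h ` (code n m v ` T)"
    unfolding PF h_def by (rule image_factor) (rule fac; assumption)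
  have sub: "code n m v ` T \<subseteq> Pairs n \<rightarrow>\<^sub>E {..2*m}" using code_in by (rule image_subsetI)
  have fin: "finite (pareto_faces n m v)" unfolding PF2
    using card_codes finite_subset[OF sub] by blast
  have cardF: "card (pareto_faces n m v) \<le> (2*m+1) ^ (n*(n-1) div 2)"
  proof -
    have "card (pareto_faces n m v) \<le> card (code n m v ` T)" unfolding PF2 by (rule card_image_le) (use card_codes finite_subset[OF sub] in blast)
    also have "\<dots> \<le> card (Pairs n \<rightarrow>\<^sub>E {..2*m})" using card_codes sub by (intro card_mono) auto
    finally show ?thesis using card_codes by simp
  qed
  define f where "f = (\<lambda>u. face n U (\<lambda>i. b i / u i))"
  have props: "(\<forall>i<n. u i < 0) \<and> (\<forall>i\<ge>n. u i = 0) \<and> u \<in> f u" if uC: "u \<in> CU n m v b" for u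
  proof -
    obtain z where z: "u = util_profile n m v z" "competitive n m v b z" using uC unfolding CU_def by blast
    show ?thesis using CE_props[OF assms z(2)] z(1) unfolding f_def U_def by (auto simp: util_profile_def)
  qed
  have inj: "inj_on f (CU n m v b)"
  proof (rule inj_onI)
    fix u u' assume "u \<in> CU n m v b" "u' \<in> CU n m v b" "f u = f u'"
    thus "u = u'" using CU_inj[OF assms(2), of u u' U] props unfolding f_def by blast
  qed
  have img: "f ` CU n m v b \<subseteq> pareto_faces n m v"
  proof
    fix F assume "F \<in> f ` CU n m v b"
    then obtain u where u: "u \<in> CU n m v b" "F = f u" by auto
    have "\<forall>i<n. b i / u i > 0" using props[OF u(1)] assms(2) by (simp add: divide_neg_neg)
    thus "F \<in> pareto_faces n m v" unfolding u(2) f_def U_def pareto_faces_def by blast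
  qed
  have finCU: "finite (CU n m v b)"
    using finite_imageD[OF finite_subset[OF img fin] inj] .
  have "card (CU n m v b) \<le> card (pareto_faces n m v)"
    by (rule card_inj_on_le[OF inj img fin])
  thus ?thesis using fin cardF finCU by simp
qed

end
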